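(* For $\theta\in[0,1/2]$ let $U_\theta=\mathrm{diag}(1,e^{2\pi i\theta})$ and, for $\epsilon\ge0$, let $\mathcal{E}_\theta(\rho)=\epsilon I/2+(1-\epsilon)U_\theta\rho U_\theta^\dagger$. Then for every $m\ge1$, $\mathcal{E}_\theta^m(\rho)=\bigl(1-(1-\epsilon)^m\bigr)I/2+(1-\epsilon)^mU_{m\theta}\rho U_{m\theta}^\dagger$. Moreover, there is an estimation protocol using no entanglement and only single-qubit preparations, sequential applications of the channel and Hadamard-basis measurements, which uses the channel $N$ times and whose estimator $\hat\theta$ satisfies $\sqrt{E(\hat\theta-\theta)^2}=O(\log N/N)$ uniformly in $\theta\in[0,1/2]$, provided $N\epsilon\le1$ (in particular for the noiseless case $\epsilon=0$).
   Context: The Hadamard basis is $|\pm\rangle=(|0\rangle\pm|1\rangle)/\sqrt2$. *)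

theory Defs
  imports "HOL-Probability.Probability"
begin

text \<open>Qubit operators are 2x2 complex matrices indexed by the finite type 2,
  whose elements 0 and 1 label the computational basis states.\<close>

type_synonym qmat = "complex ^ 2 ^ 2"

definition adj :: "qmat \<Rightarrow> qmat" where
  "adj M = (\<chi> i j. cnj (M $ j $ i))"

definition density :: "qmat \<Rightarrow> bool" where
  "density \<rho> \<longleftrightarrow> adj \<rho> = \<rho> \<and> (\<Sum>i\<in>UNIV. \<rho> $ i $ i) = 1 \<and>
     (\<forall>v :: complex ^ 2. 0 \<le> Re (\<Sum>i\<in>UNIV. \<Sum>j\<in>UNIV. cnj (v $ i) * \<rho> $ i $ j * v $ j))"

definition Uph :: "real \<Rightarrow> qmat" where
  "Uph \<theta> = (\<chi> i j. if i = j then (if i = 0 then 1 else cis (2 * pi * \<theta>)) else 0)"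

definition chan :: "real \<Rightarrow> real \<Rightarrow> qmat \<Rightarrow> qmat" where
  "chan \<theta> \<epsilon> \<rho> = (\<epsilon> / 2) *\<^sub>R mat 1 + (1 - \<epsilon>) *\<^sub>R (Uph \<theta> ** \<rho> ** adj (Uph \<theta>))"

text \<open>Probability of outcome |+> when measuring state M in the Hadamard basis:
  <+|M|+> with |+> = (|0>+|1>)/sqrt 2.\<close>
definition hprob :: "qmat \<Rightarrow> real" where
  "hprob M = Re ((\<Sum>i\<in>UNIV. \<Sum>j\<in>UNIV. M $ i $ j) / 2)"

text \<open>A (possibly adaptive) protocol without entanglement: in each round, depending
  on the outcome history h (chronological list of outcomes, True = '+'), it prepares
  the single-qubit state fst (step h), applies the channel snd (step h) times in
  sequence, and measures in the Hadamard basis.\<close>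
fun run :: "(bool list \<Rightarrow> qmat \<times> nat) \<Rightarrow> real \<Rightarrow> real \<Rightarrow> nat \<Rightarrow> bool list \<Rightarrow> bool list pmf" where
  "run step \<theta> \<epsilon> 0 h = return_pmf h"
| "run step \<theta> \<epsilon> (Suc r) h =
     bind_pmf (bernoulli_pmf (hprob ((chan \<theta> \<epsilon> ^^ snd (step h)) (fst (step h)))))
              (\<lambda>b. run step \<theta> \<epsilon> r (h @ [b]))"

definition valid_protocol :: "nat \<Rightarrow> nat \<Rightarrow> (bool list \<Rightarrow> qmat \<times> nat) \<Rightarrow> bool" where
  "valid_protocol N R step \<longleftrightarrow>
     (\<forall>h. length h < R \<longrightarrow> density (fst (step h))) \<and>
     (\<forall>h. length h = R \<longrightarrow> (\<Sum>j<R. snd (step (take j h))) = N)"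

definition rmse :: "(bool list \<Rightarrow> qmat \<times> nat) \<Rightarrow> nat \<Rightarrow> (bool list \<Rightarrow> real) \<Rightarrow> real \<Rightarrow> real \<Rightarrow> real" where
  "rmse step R est \<theta> \<epsilon> =
     sqrt (measure_pmf.expectation (run step \<theta> \<epsilon> R []) (\<lambda>h. (est h - \<theta>)^2))"

end

theory Submission
  imports Defs
begin

lemma Uph_mult: "Uph a ** Uph b = Uph (a + b)"
  by (simp add: vec_eq_iff matrix_matrix_mult_def Uph_def sum_2 forall_2 cis_mult distrib_left)
lemma adj_mult: "adj (A ** B) = adj B ** adj A"
  by (simp add: vec_eq_iff matrix_matrix_mult_def adj_def sum_2 forall_2 mult.commute)
lemma Uph_unit: "Uph a ** adj (Uph a) = mat 1"
  by (simp add: vec_eq_iff matrix_matrix_mult_def adj_def Uph_def mat_def sum_2 forall_2 cis_cnj cis_mult)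
lemma Uph0: "Uph 0 = mat 1"
  by (simp add: vec_eq_iff Uph_def mat_def forall_2)
lemma adj_id: "adj (mat 1) = mat 1"
  by (simp add: vec_eq_iff adj_def mat_def forall_2)
lemma mm_scaleR_right: "(A::qmat) ** (c *\<^sub>R B) = c *\<^sub>R (A ** B)"
  apply (simp add: vec_eq_iff matrix_matrix_mult_def sum_2 forall_2)
  apply (simp add: scaleR_conv_of_real algebra_simps)
  done
lemma mm_scaleR_left: "(c *\<^sub>R A::qmat) ** B = c *\<^sub>R (A ** B)"
  apply (simp add: vec_eq_iff matrix_matrix_mult_def sum_2 forall_2)
  apply (simp add: scaleR_conv_of_real algebra_simps)
  done
lemma mm_add_right: "((A::qmat) + B) ** C = A ** C + B ** C"
  by (simp add: vec_eq_iff matrix_matrix_mult_def sum_2 forall_2 algebra_simps)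

lemma conj_lemma: "Uph t ** (a *\<^sub>R mat 1 + b *\<^sub>R V) ** adj (Uph t) = a *\<^sub>R mat 1 + b *\<^sub>R (Uph t ** V ** adj (Uph t))"
  by (simp add: matrix_add_ldistrib mm_add_right mm_scaleR_right mm_scaleR_left Uph_unit)

lemma chan_pow: "(chan \<theta> \<epsilon> ^^ m) \<rho> =
              ((1 - (1 - \<epsilon>) ^ m) / 2) *\<^sub>R mat 1
              + ((1 - \<epsilon>) ^ m) *\<^sub>R (Uph (real m * \<theta>) ** \<rho> ** adj (Uph (real m * \<theta>)))"
proof (induction m)
  case 0
  then show ?case by (simp add: Uph0 adj_id)
next
  case (Suc m)
  have e: "Uph \<theta> ** (Uph (real m * \<theta>) ** \<rho> ** adj (Uph (real m * \<theta>))) ** adj (Uph \<theta>)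
     = Uph (real (Suc m) * \<theta>) ** \<rho> ** adj (Uph (real (Suc m) * \<theta>))"
    by (simp add: matrix_mul_assoc adj_mult Uph_mult[symmetric] algebra_simps)
  have "(chan \<theta> \<epsilon> ^^ Suc m) \<rho> = chan \<theta> \<epsilon> ((chan \<theta> \<epsilon> ^^ m) \<rho>)" by simp
  also have "\<dots> = (\<epsilon> / 2) *\<^sub>R mat 1 + (1 - \<epsilon>) *\<^sub>R
     (((1 - (1 - \<epsilon>) ^ m) / 2) *\<^sub>R mat 1
              + ((1 - \<epsilon>) ^ m) *\<^sub>R (Uph (real (Suc m) * \<theta>) ** \<rho> ** adj (Uph (real (Suc m) * \<theta>))))"
    unfolding Suc chan_def conj_lemma e ..
  also have "\<dots> = ((1 - (1 - \<epsilon>) ^ Suc m) / 2) *\<^sub>R mat 1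
              + ((1 - \<epsilon>) ^ Suc m) *\<^sub>R (Uph (real (Suc m) * \<theta>) ** \<rho> ** adj (Uph (real (Suc m) * \<theta>)))"
  proof -
    have c: "\<epsilon> / 2 + (1 - \<epsilon>) * ((1 - (1 - \<epsilon>) ^ m) / 2) = (1 - (1 - \<epsilon>) ^ Suc m) / 2"
      by (simp add: power_Suc field_simps)
    show ?thesis
      by (simp only: scaleR_add_right scaleR_scaleR add.assoc[symmetric] scaleR_add_left[symmetric] c power_Suc)
  qed
  finally show ?case .
qed



fun Ev :: "(bool list \<Rightarrow> real) \<Rightarrow> nat \<Rightarrow> bool list \<Rightarrow> (bool list \<Rightarrow> real) \<Rightarrow> real" where
  "Ev P 0 h f = f h"
| "Ev P (Suc r) h f = P h * Ev P r (h @ [True]) f + (1 - P h) * Ev P r (h @ [False]) f"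

definition Pq :: "(bool list \<Rightarrow> qmat \<times> nat) \<Rightarrow> real \<Rightarrow> real \<Rightarrow> bool list \<Rightarrow> real" where
  "Pq step \<theta> \<epsilon> h = min 1 (max 0 (hprob ((chan \<theta> \<epsilon> ^^ snd (step h)) (fst (step h)))))"

lemma pmf_bern_gen: "pmf (bernoulli_pmf p) b = (if b then min 1 (max 0 p) else 1 - min 1 (max 0 p))"
  by (auto simp: bernoulli_pmf.rep_eq)

lemma bern_clamp: "bernoulli_pmf p = bernoulli_pmf (min 1 (max 0 p))"
  by (rule pmf_eqI) (simp add: pmf_bern_gen)

lemma run_support: "set_pmf (run step \<theta> \<epsilon> r h) \<subseteq> {xs. length xs = length h + r}"
proof (induction r arbitrary: h)
  case 0 then show ?case by simp
next
  case (Suc r)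
  show ?case using Suc by (fastforce simp: set_bind_pmf)
qed

lemma expect_Ev: "measure_pmf.expectation (run step \<theta> \<epsilon> r h) f = Ev (Pq step \<theta> \<epsilon>) r h f"
proof (induction r arbitrary: h)
  case 0 then show ?case by simp
next
  case (Suc r)
  define A where "A = {xs::bool list. length xs = length h + Suc r}"
  have fA: "finite A" unfolding A_def by (rule finite_list_length)
  define p where "p = Pq step \<theta> \<epsilon> h"
  have p01: "0 \<le> p" "p \<le> 1" unfolding p_def Pq_def by auto
  have ex: "measure_pmf.expectation (run step \<theta> \<epsilon> r h') f = (\<Sum>x\<in>A. f x * pmf (run step \<theta> \<epsilon> r h') x)"
    if "length h' = Suc (length h)" for h'
    apply (rule integral_measure_pmf_real[OF fA])
    using run_support[of step \<theta> \<epsilon> r h'] that unfolding A_def by auto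
  have pm: "pmf (run step \<theta> \<epsilon> (Suc r) h) x = p * pmf (run step \<theta> \<epsilon> r (h @ [True])) x + (1 - p) * pmf (run step \<theta> \<epsilon> r (h @ [False])) x" for x
    unfolding run.simps pmf_bind
    apply (subst bern_clamp)
    apply (subst integral_bernoulli_pmf)
    using p01 by (auto simp: p_def Pq_def)
  have "measure_pmf.expectation (run step \<theta> \<epsilon> (Suc r) h) f = (\<Sum>x\<in>A. f x * pmf (run step \<theta> \<epsilon> (Suc r) h) x)"
    apply (rule integral_measure_pmf_real[OF fA])
    using run_support[of step \<theta> \<epsilon> "Suc r" h] unfolding A_def by auto
  also have "\<dots> = p * (\<Sum>x\<in>A. f x * pmf (run step \<theta> \<epsilon> r (h @ [True])) x) + (1 - p) * (\<Sum>x\<in>A. f x * pmf (run step \<theta> \<epsilon> r (h @ [False])) x)"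
    unfolding pm sum_distrib_left sum.distrib[symmetric] by (rule sum.cong) (simp_all add: algebra_simps)
  also have "\<dots> = Ev (Pq step \<theta> \<epsilon>) (Suc r) h f"
    using ex[of "h @ [True]"] ex[of "h @ [False]"] Suc[of "h @ [True]"] Suc[of "h @ [False]"]
    by (simp add: p_def)
  finally show ?case .
qed

lemma Ev_split: "Ev P (r1 + r2) h f = Ev P r1 h (\<lambda>h'. Ev P r2 h' f)"
  by (induction r1 arbitrary: h) auto

lemma Ev_const: "Ev P r h (\<lambda>_. c) = c"
  by (induction r arbitrary: h) (auto simp: algebra_simps)

lemma Ev_add_const: "Ev P r h (\<lambda>x. f x + c) = Ev P r h f + c"
  by (induction r arbitrary: h) (auto simp: algebra_simps)

lemma Ev_cmult: "Ev P r h (\<lambda>x. c * f x) = c * Ev P r h f"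
  by (induction r arbitrary: h) (auto simp: algebra_simps)

lemma Ev_mono:
  assumes P01: "\<And>h. 0 \<le> P h \<and> P h \<le> 1"
  shows "(\<And>bs. length bs = r \<Longrightarrow> f (h @ bs) \<le> g (h @ bs)) \<Longrightarrow> Ev P r h f \<le> Ev P r h g"
proof (induction r arbitrary: h)
  case 0 then show ?case using 0[of "[]"] by simp
next
  case (Suc r)
  have a: "Ev P r (h @ [b]) f \<le> Ev P r (h @ [b]) g" for b
    apply (rule Suc.IH)
    using Suc.prems[of "b # _"] by auto
  have "P h * Ev P r (h @ [True]) f \<le> P h * Ev P r (h @ [True]) g"
    using a P01[of h] by (simp add: mult_left_mono)
  moreover have "(1 - P h) * Ev P r (h @ [False]) f \<le> (1 - P h) * Ev P r (h @ [False]) g"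
    using a P01[of h] by (simp add: mult_left_mono)
  ultimately show ?case by simp
qed

lemma Ev_chernoff:
  assumes "\<And>bs. length bs < rz \<Longrightarrow> P (hz @ bs) = p"
  shows "length bs + r \<le> rz \<Longrightarrow>
    Ev P r (hz @ bs) (\<lambda>h. x ^ length (filter id (drop (length hz) h))) = x ^ length (filter id bs) * ((1 - p) + p * x) ^ r"
proof (induction r arbitrary: bs)
  case 0 then show ?case by simp
next
  case (Suc r)
  have "Ev P (Suc r) (hz @ bs) (\<lambda>h. x ^ length (filter id (drop (length hz) h))) =
     p * (x ^ length (filter id (bs @ [True])) * ((1 - p) + p * x) ^ r)
     + (1 - p) * (x ^ length (filter id (bs @ [False])) * ((1 - p) + p * x) ^ r)"
    using Suc.IH[of "bs @ [True]"] Suc.IH[of "bs @ [False]"] Suc.prems assms[of bs] by (simp add: id_def)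
  also have "\<dots> = x ^ length (filter id bs) * ((1 - p) + p * x) ^ Suc r"
    by (simp add: algebra_simps)
  finally show ?case .
qed




definition ww :: "nat \<Rightarrow> real" where "ww k = (1/4) * (3/4)^k"
definition mm :: "nat \<Rightarrow> nat" where "mm k = nat \<lfloor>(4/3::real)^k\<rfloor>"
definition cnt :: "nat \<Rightarrow> nat \<Rightarrow> bool list \<Rightarrow> nat" where
  "cnt M k h = length (filter id (take M (drop (k*M) h)))"
fun aa :: "nat \<Rightarrow> nat \<Rightarrow> bool list \<Rightarrow> real" where
  "aa M 0 h = 1/4"
| "aa M (Suc k) h = aa M k h + (if M < 2 * cnt M k h then ww k / 4 else - (ww k / 4))"
definition prep :: "real \<Rightarrow> qmat" where
  "prep \<phi> = (\<chi> i j. if i = j then 1/2 else if i = 0 then cis (-\<phi>) / 2 else cis \<phi> / 2)"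
definition phi :: "nat \<Rightarrow> nat \<Rightarrow> bool list \<Rightarrow> real" where
  "phi M k h = - 2*pi*real (mm k) * aa M k h - pi/2"
definition MM :: "nat \<Rightarrow> nat" where "MM N = nat \<lceil>1536 * ln (real N)\<rceil>"
definition cost :: "nat \<Rightarrow> nat \<Rightarrow> nat" where "cost N k = MM N * (\<Sum>j<k. mm j)"
definition KK :: "nat \<Rightarrow> nat" where "KK N = (GREATEST k. cost N k \<le> N)"
definition stp :: "nat \<Rightarrow> bool list \<Rightarrow> qmat \<times> nat" where
  "stp N h = (if length h < KK N * MM N then (prep (phi (MM N) (length h div MM N) h), mm (length h div MM N))
              else (prep 0, N - cost N (KK N)))"
definition estim :: "nat \<Rightarrow> bool list \<Rightarrow> real" where
  "estim N h = max 0 (min (1/2) (aa (MM N) (KK N) h))"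

lemma prep_density: "density (prep \<phi>)"
proof -
  have adj: "adj (prep \<phi>) = prep \<phi>"
    by (simp add: vec_eq_iff adj_def prep_def forall_2 cis_cnj)
  have tr: "(\<Sum>i\<in>UNIV. prep \<phi> $ i $ i) = 1"
    by (simp add: sum_2 prep_def)
  have psd: "0 \<le> Re (\<Sum>i\<in>UNIV. \<Sum>j\<in>UNIV. cnj (v $ i) * prep \<phi> $ i $ j * v $ j)" for v :: "complex ^ 2"
  proof -
    define w where "w = cis \<phi> * v $ 2 + v $ 1"
    have "(\<Sum>i\<in>UNIV. \<Sum>j\<in>UNIV. cnj (v $ i) * prep \<phi> $ i $ j * v $ j) = cnj w * w / 2"
      by (simp add: sum_2 prep_def w_def algebra_simps cis_cnj cis_mult add_divide_distrib)
    moreover have "0 \<le> Re (cnj w * w / 2)" by simp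
    ultimately show ?thesis by metis
  qed
  show ?thesis unfolding density_def using adj tr psd by blast
qed

lemma sumall_lin: "(\<Sum>i\<in>UNIV. \<Sum>j\<in>UNIV. (c *\<^sub>R A + d *\<^sub>R (B::qmat)) $ i $ j)
   = of_real c * (\<Sum>i\<in>UNIV. \<Sum>j\<in>UNIV. A $ i $ j) + of_real d * (\<Sum>i\<in>UNIV. \<Sum>j\<in>UNIV. B $ i $ j)"
  apply (simp add: sum_2)
  apply (simp add: scaleR_conv_of_real algebra_simps)
  done

lemma hprob_prep: "hprob ((chan \<theta> \<epsilon> ^^ m) (prep \<phi>)) = (1 + (1 - \<epsilon>)^m * cos (2*pi*(real m * \<theta>) + \<phi>)) / 2"
proof -
  define d where "d = (1 - \<epsilon>)^m"
  define t where "t = 2*pi*(real m * \<theta>)"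
  have s: "(\<Sum>i\<in>UNIV. \<Sum>j\<in>UNIV. (Uph (real m * \<theta>) ** prep \<phi> ** adj (Uph (real m * \<theta>))) $ i $ j)
        = 1 + (cis (t + \<phi>) + cis (- (t + \<phi>))) / 2"
    by (simp add: sum_2 matrix_matrix_mult_def Uph_def adj_def prep_def cis_cnj t_def cis_mult algebra_simps add_divide_distrib)
  have s2: "(\<Sum>i\<in>UNIV. \<Sum>j\<in>UNIV. (mat 1 :: qmat) $ i $ j) = 2"
    by (simp add: sum_2 mat_def)
  have "hprob ((chan \<theta> \<epsilon> ^^ m) (prep \<phi>)) = Re ((of_real ((1 - d)/2) * 2 + of_real d * (1 + (cis (t + \<phi>) + cis (- (t + \<phi>))) / 2)) / 2)"
    unfolding hprob_def chan_pow d_def[symmetric]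
    unfolding sumall_lin s s2 ..
  also have "\<dots> = (1 + d * cos (t + \<phi>)) / 2"
  proof -
    have "cos (- (t + \<phi>)) = cos (t + \<phi>)" by (rule cos_minus)
    then show ?thesis by (simp add: field_simps)
  qed
  finally show ?thesis by (simp add: d_def t_def)
qed

lemma cnt_append: "k*M + M \<le> length h \<Longrightarrow> cnt M k (h @ t) = cnt M k h"
  unfolding cnt_def by simp

lemma aa_append: "k*M \<le> length h \<Longrightarrow> aa M k (h @ t) = aa M k h"
proof (induction k)
  case 0 then show ?case by simp
next
  case (Suc k)
  then show ?case using cnt_append[of k M h t] by simp
qed

lemma mm_bounds: "1 \<le> mm k" "real (mm k) \<le> (4/3)^k" "(4/3)^k / 2 \<le> real (mm k)"
proof -
  define t :: real where "t = (4/3)^k"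
  have t1: "1 \<le> t" unfolding t_def by (simp add: one_le_power)
  have fl: "real (mm k) = of_int \<lfloor>t\<rfloor>" unfolding mm_def t_def using t1 t_def by simp
  show "1 \<le> mm k" using t1 unfolding mm_def t_def[symmetric] by linarith
  show "real (mm k) \<le> (4/3)^k" using fl t_def by linarith
  show "(4/3)^k / 2 \<le> real (mm k)"
  proof -
    have f1: "1 \<le> real_of_int \<lfloor>t\<rfloor>" using t1 by simp
    have "t / 2 \<le> real (mm k)" using fl f1 real_of_int_floor_gt_diff_one[of t] by linarith
    thus ?thesis by (simp add: t_def)
  qed
qed

lemma mw_bounds: "1/8 \<le> real (mm k) * ww k" "real (mm k) * ww k \<le> 1/4"
proof -
  have e: "(4/3::real)^k * (3/4)^k = 1" by (simp add: power_mult_distrib[symmetric])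
  have p: "0 < (3/4::real)^k" by simp
  show "1/8 \<le> real (mm k) * ww k"
    using mult_right_mono[OF mm_bounds(3)[of k] less_imp_le[OF p]] e unfolding ww_def by simp
  show "real (mm k) * ww k \<le> 1/4"
    using mult_right_mono[OF mm_bounds(2)[of k] less_imp_le[OF p]] e unfolding ww_def by simp
qed

lemma sum_shift: "(\<Sum>j<n + (i::nat). g j) = (\<Sum>j<n. g j) + (\<Sum>t<i. g (n + t))"
  by (induction i) (auto simp: add.assoc)

lemma sum_div: "0 < M \<Longrightarrow> (\<Sum>j<K*M. (g::nat\<Rightarrow>nat) (j div M)) = M * (\<Sum>k<K. g k)"
proof (induction K)
  case 0 then show ?case by simp
next
  case (Suc K)
  have "(\<Sum>j<Suc K*M. g (j div M)) = (\<Sum>j<K*M. g (j div M)) + (\<Sum>t<M. g ((K*M + t) div M))"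
    using sum_shift[of "\<lambda>j. g (j div M)" "K*M" M] by (simp add: add.commute)
  also have "(\<Sum>t<M. g ((K*M + t) div M)) = (\<Sum>t<M. g K)"
    using Suc.prems by (intro sum.cong) auto
  finally show ?case using Suc by (simp add: algebra_simps)
qed

lemma MM_ge: assumes "3 \<le> N" shows "2 \<le> MM N" "1536 * ln (real N) \<le> real (MM N)" "real (MM N) \<le> 1536 * ln (real N) + 1"
proof -
  have "exp 1 \<le> real N" using e_less_272 assms by simp
  hence l: "1 \<le> ln (real N)" using assms by (simp add: ln_ge_iff)
  show "1536 * ln (real N) \<le> real (MM N)" unfolding MM_def by linarith
  show "real (MM N) \<le> 1536 * ln (real N) + 1" unfolding MM_def using l by linarith
  show "2 \<le> MM N" unfolding MM_def using l by linarith
qed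

lemma cost_mono_ge: "0 < MM N \<Longrightarrow> k \<le> cost N k"
proof -
  assume "0 < MM N"
  have "k = (\<Sum>j<k. 1)" by simp
  also have "\<dots> \<le> (\<Sum>j<k. mm j)" by (intro sum_mono) (use mm_bounds(1) in auto)
  also have "\<dots> \<le> cost N k" unfolding cost_def using \<open>0 < MM N\<close> by simp
  finally show ?thesis .
qed

lemma KK_props: assumes "0 < MM N"
  shows "cost N (KK N) \<le> N" "N < cost N (Suc (KK N))" "KK N \<le> N"
proof -
  have b: "\<And>y. cost N y \<le> N \<Longrightarrow> y \<le> N" using cost_mono_ge[OF assms] le_trans by blast
  have z: "cost N 0 \<le> N" by (simp add: cost_def)
  show c: "cost N (KK N) \<le> N" unfolding KK_def by (rule GreatestI_nat[where P="\<lambda>k. cost N k \<le> N", OF z b])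
  show "KK N \<le> N" using b[OF c] .
  show "N < cost N (Suc (KK N))"
  proof (rule ccontr)
    assume "\<not> N < cost N (Suc (KK N))"
    hence "Suc (KK N) \<le> KK N" unfolding KK_def[of N] by (intro Greatest_le_nat[where P="\<lambda>k. cost N k \<le> N", OF _ b]) simp
    thus False by simp
  qed
qed

lemma valid: assumes "0 < MM N" shows "valid_protocol N (KK N * MM N + 1) (stp N)"
  unfolding valid_protocol_def
proof (intro conjI allI impI)
  fix h :: "bool list"
  show "density (fst (stp N h))" by (simp add: stp_def prep_density)
next
  fix h :: "bool list"
  assume l: "length h = KK N * MM N + 1"
  have "(\<Sum>j<KK N * MM N + 1. snd (stp N (take j h))) = (\<Sum>j<KK N * MM N. mm (j div MM N)) + (N - cost N (KK N))"
  proof -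
    have "(\<Sum>j<KK N * MM N. snd (stp N (take j h))) = (\<Sum>j<KK N * MM N. mm (j div MM N))"
      by (intro sum.cong) (auto simp: stp_def l min_def)
    moreover have "snd (stp N (take (KK N * MM N) h)) = N - cost N (KK N)"
      by (simp add: stp_def l)
    ultimately show ?thesis by simp
  qed
  also have "\<dots> = N"
    using sum_div[OF assms, where K="KK N" and g=mm] KK_props(1)[OF assms] by (simp add: cost_def)
  finally show "(\<Sum>j<KK N * MM N + 1. snd (stp N (take j h))) = N" .
qed




lemma sin_bound: assumes "pi/8 \<le> x" "x \<le> pi/2" shows "1/4 \<le> sin x"
proof -
  have m: "sin (pi/8) \<le> sin x" using assms by (intro sin_monotone_2pi_le) auto
  have "sin (pi/4) = 2 * sin (pi/8) * cos (pi/8)"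
    using sin_double[of "pi/8"] by simp
  also have "\<dots> \<le> 2 * sin (pi/8)"
  proof -
    have "0 \<le> sin (pi/8)" by (rule sin_ge_zero) auto
    thus ?thesis using cos_le_one[of "pi/8"] by (simp add: mult_left_le)
  qed
  finally have "sqrt 2 / 2 \<le> 2 * sin (pi/8)" by (simp add: sin_45)
  moreover have "1 \<le> sqrt (2::real)" by simp
  ultimately show ?thesis using m by linarith
qed

locale setting =
  fixes N :: nat and \<theta> \<epsilon> :: real
  assumes N3: "3 \<le> N" and th0: "0 \<le> \<theta>" and th1: "\<theta> \<le> 1/2"
    and ep0: "0 \<le> \<epsilon>" and epN: "real N * \<epsilon> \<le> 1"
begin

abbreviation "M \<equiv> MM N"
abbreviation "K \<equiv> KK N"
abbreviation "P \<equiv> Pq (stp N) \<theta> \<epsilon>"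

lemma M2: "2 \<le> M" using MM_ge(1)[OF N3] .
lemma Mpos: "0 < M" using M2 by simp

lemma P01: "0 \<le> P h \<and> P h \<le> 1" by (simp add: Pq_def)

lemma ep1: "\<epsilon> \<le> 1"
proof -
  have "1 * \<epsilon> \<le> real N * \<epsilon>" using N3 ep0 by (intro mult_right_mono) auto
  thus ?thesis using epN by simp
qed

lemma mm_eps: assumes "k < K" shows "real (mm k) * \<epsilon> \<le> 1/2"
proof -
  have "mm k \<le> (\<Sum>j<K. mm j)" using assms by (intro member_le_sum) auto
  hence "M * mm k \<le> N" using KK_props(1)[OF Mpos] unfolding cost_def
    by (meson le_trans mult_le_mono2)
  hence "2 * mm k \<le> N" using M2 by (meson le_trans mult_le_mono1)
  hence "2 * real (mm k) \<le> real N" by linarith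
  hence "2 * real (mm k) * \<epsilon> \<le> real N * \<epsilon>" using ep0 by (intro mult_right_mono) auto
  thus ?thesis using epN by linarith
qed

lemma d_bounds: assumes "k < K" shows "1/2 \<le> (1 - \<epsilon>)^(mm k)" "(1 - \<epsilon>)^(mm k) \<le> 1"
proof -
  have "1 + real (mm k) * (- \<epsilon>) \<le> (1 + - \<epsilon>)^(mm k)"
    using ep1 by (intro Bernoulli_inequality) simp
  thus "1/2 \<le> (1 - \<epsilon>)^(mm k)" using mm_eps[OF assms] by simp
  show "(1 - \<epsilon>)^(mm k) \<le> 1" using ep0 ep1 by (intro power_le_one) auto
qed

lemma P_formula: assumes "length h < K * M"
  shows "P h = (1 + (1 - \<epsilon>)^(mm (length h div M)) * sin (2*pi*real (mm (length h div M)) * (\<theta> - aa M (length h div M) h))) / 2"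
proof -
  define k where "k = length h div M"
  have kK: "k < K" using assms Mpos unfolding k_def
    by (simp add: less_mult_imp_div_less)
  define d where "d = (1 - \<epsilon>)^(mm k)"
  define s where "s = sin (2*pi*real (mm k) * (\<theta> - aa M k h))"
  have ang: "2 * pi * (real (mm k) * \<theta>) + phi M k h = 2*pi*real (mm k) * (\<theta> - aa M k h) - pi/2"
    unfolding phi_def by (simp add: algebra_simps)
  have hp: "hprob ((chan \<theta> \<epsilon> ^^ snd (stp N h)) (fst (stp N h))) = (1 + d * s) / 2"
    using assms unfolding stp_def k_def[symmetric]
    by (simp add: hprob_prep ang cos_diff d_def s_def)
  have "\<bar>d * s\<bar> \<le> 1"
  proof -
    have "\<bar>s\<bar> \<le> 1" unfolding s_def by simp
    moreover have "0 \<le> d" "d \<le> 1" using d_bounds[OF kK] unfolding d_def by auto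
    ultimately show ?thesis by (simp add: abs_mult mult_le_one)
  qed
  hence "0 \<le> (1 + d * s) / 2 \<and> (1 + d * s) / 2 \<le> 1" by (simp add: abs_le_iff)
  thus ?thesis unfolding Pq_def hp by (simp add: k_def[symmetric] d_def s_def)
qed

lemma P_block: assumes "length h0 = k * M" "k < K" "length bs < M"
  shows "P (h0 @ bs) = P h0"
proof -
  have d1: "length (h0 @ bs) div M = k" using assms Mpos by simp
  have d0: "length h0 div M = k" using assms Mpos by simp
  have l1: "length (h0 @ bs) < K * M"
  proof -
    have "k * M + M \<le> K * M" using assms(2) by (metis Suc_leI mult_Suc mult_le_mono1 add.commute)
    thus ?thesis using assms by simp
  qed
  have l0: "length h0 < K * M" using l1 by simp
  show ?thesis using P_formula[OF l1] P_formula[OF l0] unfolding d1 d0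
    using aa_append[of k M h0 bs] assms(1) by simp
qed

definition ind :: "nat \<Rightarrow> bool list \<Rightarrow> real" where
  "ind j h = (if \<bar>\<theta> - aa M j h\<bar> \<le> ww j then 0 else 1)"

lemma aa_step: assumes "length h0 = k * M" "length bs = M"
  shows "aa M (Suc k) (h0 @ bs) = aa M k h0 + (if M < 2 * length (filter id bs) then ww k / 4 else - (ww k / 4))"
proof -
  have "cnt M k (h0 @ bs) = length (filter id bs)" unfolding cnt_def using assms by simp
  thus ?thesis using aa_append[of k M h0 bs] assms by simp
qed

lemma fail_stage: assumes len: "length h0 = k * M" and kK: "k < K" and inv: "\<bar>\<theta> - aa M k h0\<bar> \<le> ww k"
  shows "Ev P M h0 (ind (Suc k)) \<le> (511/512)^M"
proof -
  define a where "a = aa M k h0"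
  define w where "w = ww k"
  define m where "m = real (mm k)"
  define d where "d = (1 - \<epsilon>)^(mm k)"
  define p where "p = P h0"
  define y :: real where "y = 17/16"
  have w1: "ww (Suc k) = 3 * w / 4" unfolding w_def ww_def by simp
  have wpos: "0 < w" unfolding w_def ww_def by simp
  have inv': "\<bar>\<theta> - a\<bar> \<le> w" using inv unfolding a_def w_def .
  have l0: "length h0 < K * M" using len kK Mpos by simp
  have pf: "p = (1 + d * sin (2*pi*m*(\<theta> - a))) / 2"
    using P_formula[OF l0] len Mpos unfolding p_def d_def m_def a_def by simp
  have dd: "1/2 \<le> d" "d \<le> 1" using d_bounds[OF kK] unfolding d_def by auto
  have mw: "1/8 \<le> m * w" "m * w \<le> 1/4" using mw_bounds[of k] unfolding m_def w_def by auto
  have ind_eq: "ind (Suc k) (h0 @ bs) = (if \<bar>\<theta> - (a + (if M < 2 * length (filter id bs) then w / 4 else - (w / 4)))\<bar> \<le> 3 * w / 4 then 0 else 1)"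
    if "length bs = M" for bs
    unfolding ind_def aa_step[OF len that] w1 a_def w_def ..
  have blk: "\<And>bs. length bs < M \<Longrightarrow> P (h0 @ bs) = p"
    unfolding p_def using P_block[OF len kK] by blast
  have ch: "Ev P M h0 (\<lambda>h. x ^ length (filter id (drop (length h0) h))) = ((1 - p) + p * x) ^ M" for x
    using Ev_chernoff[where bs="[]" and r=M and rz=M and hz=h0 and P=P and p=p, OF blk] by simp
  have beta: "0 \<le> (511/512::real)^M" by simp
  consider (A) "\<bar>\<theta> - a\<bar> < w/2" | (B) "w/2 \<le> \<theta> - a" | (C) "\<theta> - a \<le> - (w/2)" by linarith
  then show ?thesis
  proof cases
    case A
    have "Ev P M h0 (ind (Suc k)) \<le> Ev P M h0 (\<lambda>_. 0)"
      by (rule Ev_mono[OF P01]) (use A wpos in \<open>auto simp: ind_eq split: abs_split\<close>)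
    thus ?thesis using beta by (simp add: Ev_const del: zero_le_power)
  next
    case B
    have xr: "pi/8 \<le> 2*pi*m*(\<theta> - a)" "2*pi*m*(\<theta> - a) \<le> pi/2"
    proof -
      have "m * (w/2) \<le> m * (\<theta> - a)" using B m_def by (intro mult_left_mono) auto
      hence q1: "1/16 \<le> m * (\<theta> - a)" using mw by linarith
      show "pi/8 \<le> 2*pi*m*(\<theta> - a)" using mult_left_mono[OF q1, of "2*pi"] pi_gt_zero by (simp add: mult.assoc)
      have "m * (\<theta> - a) \<le> m * w" using inv m_def unfolding a_def w_def by (intro mult_left_mono) auto
      hence q2: "m * (\<theta> - a) \<le> 1/4" using mw by linarith
      show "2*pi*m*(\<theta> - a) \<le> pi/2" using mult_left_mono[OF q2, of "2*pi"] pi_gt_zero by (simp add: mult.assoc)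
    qed
    have sb: "1/4 \<le> sin (2*pi*m*(\<theta> - a))" by (rule sin_bound[OF xr])
    have "1/8 \<le> d * sin (2*pi*m*(\<theta> - a))"
      using mult_mono[OF dd(1) sb] dd by simp
    hence p9: "9/16 \<le> p" using pf by simp
    have p1: "p \<le> 1" unfolding p_def using P01 by simp
    have bound: "ind (Suc k) (h0 @ bs) \<le> y^M * (1/y^2) ^ length (filter id (drop (length h0) (h0 @ bs)))"
      if lb: "length bs = M" for bs
    proof (cases "M < 2 * length (filter id bs)")
      case True
      have "ind (Suc k) (h0 @ bs) = 0" using B inv' True unfolding ind_eq[OF lb] by (auto split: abs_split)
      then show ?thesis by (simp add: y_def)
    next
      case False
      have "(y^2) ^ length (filter id bs) \<le> y ^ M"
        unfolding power_mult[symmetric] using False by (intro power_increasing) (auto simp: y_def)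
      hence "1 \<le> y^M * (1/y^2) ^ length (filter id bs)"
        by (simp add: y_def power_one_over field_simps)
      then show ?thesis unfolding ind_eq[OF lb] by simp
    qed
    have "Ev P M h0 (ind (Suc k)) \<le> Ev P M h0 (\<lambda>h. y^M * (1/y^2) ^ length (filter id (drop (length h0) h)))"
      by (rule Ev_mono[OF P01]) (use bound in auto)
    also have "\<dots> = y^M * ((1 - p) + p * (1/y^2)) ^ M" by (simp add: Ev_cmult ch)
    also have "\<dots> = (y * (1 - p) + p / y) ^ M" by (simp add: power_mult_distrib[symmetric] y_def field_simps)
    also have "\<dots> \<le> (511/512) ^ M"
    proof (rule power_mono)
      show "y * (1 - p) + p / y \<le> 511/512"
      proof -
        have "y * (1 - p) + p / y = 17/16 - (33/272) * p" unfolding y_def by (simp add: field_simps)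
        thus ?thesis using p9 by linarith
      qed
      show "0 \<le> y * (1 - p) + p / y" using p9 p1 unfolding y_def by simp
    qed
    finally show ?thesis .
  next
    case C
    have xr: "pi/8 \<le> 2*pi*m*(a - \<theta>)" "2*pi*m*(a - \<theta>) \<le> pi/2"
    proof -
      have "m * (w/2) \<le> m * (a - \<theta>)" using C m_def by (intro mult_left_mono) auto
      hence q1: "1/16 \<le> m * (a - \<theta>)" using mw by linarith
      show "pi/8 \<le> 2*pi*m*(a - \<theta>)" using mult_left_mono[OF q1, of "2*pi"] pi_gt_zero by (simp add: mult.assoc)
      have "m * (a - \<theta>) \<le> m * w" using inv m_def unfolding a_def w_def by (intro mult_left_mono) auto
      hence q2: "m * (a - \<theta>) \<le> 1/4" using mw by linarith
      show "2*pi*m*(a - \<theta>) \<le> pi/2" using mult_left_mono[OF q2, of "2*pi"] pi_gt_zero by (simp add: mult.assoc)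
    qed
    have sb: "1/4 \<le> sin (2*pi*m*(a - \<theta>))" by (rule sin_bound[OF xr])
    have sneg: "sin (2*pi*m*(\<theta> - a)) = - sin (2*pi*m*(a - \<theta>))"
      by (metis minus_diff_eq mult_minus_right sin_minus)
    have "1/8 \<le> d * sin (2*pi*m*(a - \<theta>))"
      using mult_mono[OF dd(1) sb] dd by simp
    hence p7: "p \<le> 7/16" using pf sneg by simp
    have p0: "0 \<le> p" unfolding p_def using P01 by simp
    have bound: "ind (Suc k) (h0 @ bs) \<le> (1/y)^M * (y^2) ^ length (filter id (drop (length h0) (h0 @ bs)))"
      if lb: "length bs = M" for bs
    proof (cases "M < 2 * length (filter id bs)")
      case False
      have "ind (Suc k) (h0 @ bs) = 0" using C inv' False unfolding ind_eq[OF lb] by (auto split: abs_split)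
      then show ?thesis by (simp add: y_def)
    next
      case True
      have "y ^ M \<le> (y^2) ^ length (filter id bs)"
        unfolding power_mult[symmetric] using True by (intro power_increasing) (auto simp: y_def)
      hence "1 \<le> (1/y)^M * (y^2) ^ length (filter id bs)"
        by (simp add: y_def power_one_over field_simps)
      then show ?thesis unfolding ind_eq[OF lb] by simp
    qed
    have "Ev P M h0 (ind (Suc k)) \<le> Ev P M h0 (\<lambda>h. (1/y)^M * (y^2) ^ length (filter id (drop (length h0) h)))"
      by (rule Ev_mono[OF P01]) (use bound in auto)
    also have "\<dots> = (1/y)^M * ((1 - p) + p * y^2) ^ M" by (simp add: Ev_cmult ch)
    also have "\<dots> = ((1 - p) / y + p * y) ^ M" by (simp add: power_mult_distrib[symmetric] y_def field_simps)
    also have "\<dots> \<le> (511/512) ^ M"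
    proof (rule power_mono)
      show "(1 - p) / y + p * y \<le> 511/512"
      proof -
        have "(1 - p) / y + p * y = 16/17 + (33/272) * p" unfolding y_def by (simp add: field_simps)
        thus ?thesis using p7 by linarith
      qed
      show "0 \<le> (1 - p) / y + p * y" using p7 p0 unfolding y_def by simp
    qed
    finally show ?thesis .
  qed
qed

lemma ind01: "0 \<le> ind j h" "ind j h \<le> 1" by (auto simp: ind_def)

lemma stages: "k \<le> K \<Longrightarrow> Ev P (k * M) [] (ind k) \<le> real k * (511/512)^M"
proof (induction k)
  case 0
  have "ind 0 [] = 0" using th0 th1 by (auto simp: ind_def ww_def split: abs_split)
  then show ?case by simp
next
  case (Suc k)
  have kK: "k < K" using Suc.prems by simp
  have "Ev P (Suc k * M) [] (ind (Suc k)) = Ev P (k * M) [] (\<lambda>h. Ev P M h (ind (Suc k)))"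
    by (simp add: Ev_split[symmetric] add.commute)
  also have "\<dots> \<le> Ev P (k * M) [] (\<lambda>h. ind k h + (511/512)^M)"
  proof (rule Ev_mono[OF P01])
    fix bs :: "bool list" assume lb: "length bs = k * M"
    show "Ev P M ([] @ bs) (ind (Suc k)) \<le> ind k ([] @ bs) + (511/512)^M"
    proof (cases "\<bar>\<theta> - aa M k bs\<bar> \<le> ww k")
      case True
      then show ?thesis using fail_stage[OF lb kK True] by (simp add: ind_def)
    next
      case False
      have "Ev P M bs (ind (Suc k)) \<le> Ev P M bs (\<lambda>_. 1)"
        by (rule Ev_mono[OF P01]) (simp add: ind01)
      moreover have "Ev P M bs (\<lambda>_. 1) = 1" by (rule Ev_const)
      moreover have "0 \<le> (511/512::real)^M" by simp
      ultimately have "Ev P M bs (ind (Suc k)) \<le> 1 + (511/512)^M" by linarith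
      moreover have "ind k bs = 1" using False by (simp add: ind_def)
      ultimately show ?thesis by simp
    qed
  qed
  also have "\<dots> = Ev P (k * M) [] (ind k) + (511/512)^M" by (rule Ev_add_const)
  also have "\<dots> \<le> real (Suc k) * (511/512)^M" using Suc.IH kK by (simp add: algebra_simps)
  finally show ?case .
qed

lemma final_Ev: "Ev P (K * M + 1) [] (\<lambda>h. (estim N h - \<theta>)^2) \<le> (ww K)^2 + real K * (511/512)^M / 4"
proof -
  have "Ev P (K * M + 1) [] (\<lambda>h. (estim N h - \<theta>)^2) = Ev P (K * M) [] (\<lambda>h. Ev P 1 h (\<lambda>h. (estim N h - \<theta>)^2))"
    by (rule Ev_split)
  also have "\<dots> \<le> Ev P (K * M) [] (\<lambda>h. (ww K)^2 + (1/4) * ind K h)"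
  proof (rule Ev_mono[OF P01])
    fix bs :: "bool list" assume lb: "length bs = K * M"
    have e: "estim N (bs @ [b]) = estim N bs" for b
      unfolding estim_def using aa_append[of K M bs "[b]"] lb by simp
    have "Ev P 1 bs (\<lambda>h. (estim N h - \<theta>)^2) = (estim N bs - \<theta>)^2"
      by (simp add: e algebra_simps)
    also have "\<dots> \<le> (ww K)^2 + (1/4) * ind K bs"
    proof (cases "\<bar>\<theta> - aa M K bs\<bar> \<le> ww K")
      case True
      have "\<bar>estim N bs - \<theta>\<bar> \<le> ww K" using True th0 th1 unfolding estim_def by (auto split: abs_split)
      hence "(estim N bs - \<theta>)^2 \<le> (ww K)^2"
        by (metis abs_ge_zero order_trans power2_abs power_mono)
      then show ?thesis using True by (simp add: ind_def)
    next
      case False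
      have "\<bar>estim N bs - \<theta>\<bar> \<le> 1/2" using th0 th1 unfolding estim_def by (auto split: abs_split)
      hence "(estim N bs - \<theta>)^2 \<le> (1/2)^2"
        by (metis abs_ge_zero power2_abs power_mono)
      moreover have "ind K bs = 1" using False by (simp add: ind_def)
      moreover have "0 \<le> (ww K)^2" by simp
      moreover have "(1/2::real)^2 = 1/4" by (simp add: power2_eq_square)
      ultimately show ?thesis by linarith
    qed
    finally show "Ev P 1 ([] @ bs) (\<lambda>h. (estim N h - \<theta>)^2) \<le> (ww K)^2 + (1/4) * ind K ([] @ bs)" by simp
  qed
  also have "\<dots> = (ww K)^2 + (1/4) * Ev P (K * M) [] (ind K)"
    using Ev_add_const[of P "K*M" "[]" "\<lambda>h. (1/4) * ind K h" "(ww K)^2"] Ev_cmult[of P "K*M" "[]" "1/4" "ind K"]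
    by (simp add: add.commute)
  also have "\<dots> \<le> (ww K)^2 + real K * (511/512)^M / 4" using stages[of K] by simp
  finally show ?thesis .
qed

lemma geom: "(\<Sum>j<n. (4/3::real)^j) = 3 * ((4/3)^n - 1)"
  by (induction n) (auto simp: algebra_simps)

lemma wK: "ww K * real N \<le> real M"
proof -
  have "real N < real (cost N (Suc K))" using KK_props(2)[OF Mpos] by linarith
  also have "\<dots> = real M * (\<Sum>j<Suc K. real (mm j))" unfolding cost_def by simp
  also have "\<dots> \<le> real M * (\<Sum>j<Suc K. (4/3::real)^j)"
    by (intro mult_left_mono sum_mono) (auto simp: mm_bounds)
  also have "\<dots> = real M * (3 * ((4/3)^Suc K - 1))" by (simp add: geom)
  also have "\<dots> \<le> real M * (4 * (4/3)^K)" by (intro mult_left_mono) auto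
  finally have n: "real N \<le> real M * (4 * (4/3)^K)" by simp
  have e: "ww K * (real M * (4 * (4/3)^K)) = real M"
    unfolding ww_def by (simp add: power_mult_distrib[symmetric])
  have "ww K * real N \<le> ww K * (real M * (4 * (4/3)^K))"
    using n by (intro mult_left_mono) (auto simp: ww_def)
  thus ?thesis using e by simp
qed

lemma Kbeta: "real K * (511/512)^M \<le> 1 / (real N)^2"
proof -
  have Npos: "0 < real N" using N3 by simp
  have "(511/512::real)^M \<le> exp (-1/512)^M"
    using exp_ge_add_one_self[of "-1/512"] by (intro power_mono) auto
  also have "\<dots> = exp (real M * (-1/512))" by (rule exp_of_nat_mult[symmetric])
  also have "\<dots> \<le> exp (real 3 * (- ln (real N)))"
    using MM_ge(2)[OF N3] by simp
  also have "\<dots> = exp (- ln (real N))^3" by (rule exp_of_nat_mult)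
  also have "\<dots> = 1 / (real N)^3" using Npos by (simp add: exp_minus power_one_over inverse_eq_divide)
  finally have b: "(511/512::real)^M \<le> 1 / (real N)^3" .
  have "real K * (511/512)^M \<le> real N * (1 / (real N)^3)"
    using KK_props(3)[OF Mpos] b by (intro mult_mono) auto
  also have "\<dots> = 1 / (real N)^2" using Npos by (simp add: power2_eq_square power3_eq_cube)
  finally show ?thesis .
qed

lemma final_bound: "rmse (stp N) (K * M + 1) (estim N) \<theta> \<epsilon> \<le> 1538 * ln (real N) / real N"
proof -
  have Npos: "0 < real N" using N3 by simp
  have l1: "1 \<le> ln (real N)"
  proof -
    have "exp 1 \<le> real N" using e_less_272 N3 by simp
    thus ?thesis using Npos by (simp add: ln_ge_iff)
  qed
  define w where "w = real M / real N"
  define b where "b = 1 / (2 * real N)"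
  have w0: "0 \<le> w" "0 \<le> b" unfolding w_def b_def by auto
  have wk: "0 \<le> ww K" "ww K \<le> w" using wK Npos unfolding w_def by (auto simp: ww_def field_simps)
  have "rmse (stp N) (K * M + 1) (estim N) \<theta> \<epsilon> = sqrt (Ev P (K * M + 1) [] (\<lambda>h. (estim N h - \<theta>)^2))"
    unfolding rmse_def expect_Ev ..
  also have "\<dots> \<le> sqrt ((ww K)^2 + real K * (511/512)^M / 4)"
    using final_Ev by (rule real_sqrt_le_mono)
  also have "\<dots> \<le> sqrt ((w + b)^2)"
  proof (rule real_sqrt_le_mono)
    have "(ww K)^2 \<le> w^2" using wk by (intro power_mono) auto
    moreover have "real K * (511/512)^M / 4 \<le> b^2" using Kbeta unfolding b_def by (simp add: power2_eq_square)
    moreover have "w^2 + b^2 \<le> (w + b)^2" using w0 by (simp add: power2_eq_square algebra_simps)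
    ultimately show "(ww K)^2 + real K * (511/512)^M / 4 \<le> (w + b)^2" by linarith
  qed
  also have "\<dots> = w + b" using w0 by simp
  also have "\<dots> \<le> 1538 * ln (real N) / real N"
  proof -
    have "real M + 1/2 \<le> 1538 * ln (real N)" using MM_ge(3)[OF N3] l1 by linarith
    hence "(real M + 1/2) / real N \<le> 1538 * ln (real N) / real N" using Npos by (intro divide_right_mono) auto
    moreover have "w + b = (real M + 1/2) / real N" unfolding w_def b_def using Npos by (simp add: field_simps)
    ultimately show ?thesis by simp
  qed
  finally show ?thesis .
qed

end

theorem mainTheorem13:
  shows "(\<forall>\<theta> \<epsilon> \<rho> m. 0 \<le> \<theta> \<longrightarrow> \<theta> \<le> 1/2 \<longrightarrow> 0 \<le> \<epsilon> \<longrightarrow> density \<rho> \<longrightarrow> 1 \<le> m \<longrightarrow>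
            (chan \<theta> \<epsilon> ^^ m) \<rho> =
              ((1 - (1 - \<epsilon>) ^ m) / 2) *\<^sub>R mat 1
              + ((1 - \<epsilon>) ^ m) *\<^sub>R (Uph (real m * \<theta>) ** \<rho> ** adj (Uph (real m * \<theta>))))
       \<and> (\<exists>C N0. \<forall>N::nat. N \<ge> N0 \<longrightarrow>
            (\<exists>R step est. valid_protocol N R step \<and>
               (\<forall>\<theta> \<epsilon>. 0 \<le> \<theta> \<longrightarrow> \<theta> \<le> 1/2 \<longrightarrow> 0 \<le> \<epsilon> \<longrightarrow> real N * \<epsilon> \<le> 1 \<longrightarrow>
                  rmse step R est \<theta> \<epsilon> \<le> C * ln (real N) / real N)))"
proof (intro conjI)
  show "\<forall>\<theta> \<epsilon> \<rho> m. 0 \<le> \<theta> \<longrightarrow> \<theta> \<le> 1/2 \<longrightarrow> 0 \<le> \<epsilon> \<longrightarrow> density \<rho> \<longrightarrow> 1 \<le> m \<longrightarrow>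
            (chan \<theta> \<epsilon> ^^ m) \<rho> =
              ((1 - (1 - \<epsilon>) ^ m) / 2) *\<^sub>R mat 1
              + ((1 - \<epsilon>) ^ m) *\<^sub>R (Uph (real m * \<theta>) ** \<rho> ** adj (Uph (real m * \<theta>)))"
    using chan_pow by blast
  show "\<exists>C N0. \<forall>N::nat. N \<ge> N0 \<longrightarrow>
            (\<exists>R step est. valid_protocol N R step \<and>
               (\<forall>\<theta> \<epsilon>. 0 \<le> \<theta> \<longrightarrow> \<theta> \<le> 1/2 \<longrightarrow> 0 \<le> \<epsilon> \<longrightarrow> real N * \<epsilon> \<le> 1 \<longrightarrow>
                  rmse step R est \<theta> \<epsilon> \<le> C * ln (real N) / real N))"
  proof (intro exI allI impI)
    fix N :: nat assume N3: "3 \<le> N"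
    have Mp: "0 < MM N" using MM_ge(1)[OF N3] by simp
    show "valid_protocol N (KK N * MM N + 1) (stp N) \<and>
          (\<forall>\<theta> \<epsilon>. 0 \<le> \<theta> \<longrightarrow> \<theta> \<le> 1/2 \<longrightarrow> 0 \<le> \<epsilon> \<longrightarrow> real N * \<epsilon> \<le> 1 \<longrightarrow>
                  rmse (stp N) (KK N * MM N + 1) (estim N) \<theta> \<epsilon> \<le> 1538 * ln (real N) / real N)"
    proof (intro conjI allI impI)
      show "valid_protocol N (KK N * MM N + 1) (stp N)" by (rule valid[OF Mp])
      fix \<theta> \<epsilon> :: real
      assume "0 \<le> \<theta>" "\<theta> \<le> 1/2" "0 \<le> \<epsilon>" "real N * \<epsilon> \<le> 1"
      then interpret setting N \<theta> \<epsilon> using N3 by unfold_locales auto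
      show "rmse (stp N) (KK N * MM N + 1) (estim N) \<theta> \<epsilon> \<le> 1538 * ln (real N) / real N"
        by (rule final_bound)
    qed
  qed
qed

end
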